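(* Let $k$ be a positive integer. Among all real numbers $1\ge a_1\ge\dots\ge a_k\ge0$ with $\sum_{i=1}^k a_i=1$, the value of \[\frac{1}{\prod_{i=1}^k(1-a_i)^{1-a_i}\,a_i^{2a_i}}\] (with the convention $0^0=1$) is maximized when $a_i=\frac1k$ for all $i$. *)

theory Defs
  imports "HOL-Analysis.Analysis"
begin

definition pow00 :: "real \<Rightarrow> real \<Rightarrow> real" where
  "pow00 x y = (if x = 0 then (if y = 0 then 1 else 0) else x powr y)"

definition Fval :: "nat \<Rightarrow> (nat \<Rightarrow> real) \<Rightarrow> real" where
  "Fval k a = 1 / (\<Prod>i=1..k. pow00 (1 - a i) (1 - a i) * pow00 (a i) (2 * a i))"

end

theory Submission
  imports Defs
begin

definition hh :: "real \<Rightarrow> real" where "hh x = x * ln x"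

lemma hh_tangent:
  assumes "0 \<le> x" "0 < c"
  shows "hh c + (ln c + 1) * (x - c) \<le> hh x"
proof (cases "x = 0")
  case True
  then show ?thesis using assms by (simp add: hh_def algebra_simps)
next
  case False
  then have xp: "x > 0" using assms by simp
  have "ln (c / x) \<le> c / x - 1" using xp assms by (intro ln_le_minus_one) simp
  then have "ln c - ln x \<le> c / x - 1" using xp assms by (simp add: ln_div)
  then have "x * (ln c - ln x) \<le> x * (c / x - 1)" using xp by (intro mult_left_mono) auto
  then have "x * ln c - x * ln x \<le> c - x" using xp by (simp add: algebra_simps)
  then show ?thesis by (simp add: hh_def algebra_simps)
qed

lemma pow00_self: "0 \<le> x \<Longrightarrow> pow00 x x = exp (hh x)"
  by (auto simp: pow00_def hh_def powr_def mult.commute)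

lemma pow00_two: "0 \<le> x \<Longrightarrow> pow00 x (2 * x) = exp (2 * hh x)"
  by (auto simp: pow00_def hh_def powr_def mult.commute mult.left_commute)

lemma prod_exp_form:
  fixes k :: nat and a :: "nat \<Rightarrow> real"
  assumes "\<And>i. 1 \<le> i \<Longrightarrow> i \<le> k \<Longrightarrow> 0 \<le> a i \<and> a i \<le> 1"
  shows "(\<Prod>i=1..k. pow00 (1 - a i) (1 - a i) * pow00 (a i) (2 * a i))
       = exp (\<Sum>i=1..k. hh (1 - a i) + 2 * hh (a i))"
proof -
  have "(\<Prod>i=1..k. pow00 (1 - a i) (1 - a i) * pow00 (a i) (2 * a i))
      = (\<Prod>i=1..k. exp (hh (1 - a i) + 2 * hh (a i)))"
    using assms by (intro prod.cong) (auto simp: pow00_self pow00_two exp_add)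
  also have "\<dots> = exp (\<Sum>i=1..k. hh (1 - a i) + 2 * hh (a i))"
    using exp_sum[of "{1..k}" "\<lambda>i. hh (1 - a i) + 2 * hh (a i)"] by simp
  finally show ?thesis .
qed

theorem lemma3p12:
  fixes k :: nat and a :: "nat \<Rightarrow> real"
  assumes "k \<ge> 1"
    and "\<And>i. 1 \<le> i \<Longrightarrow> i \<le> k \<Longrightarrow> 0 \<le> a i \<and> a i \<le> 1"
    and "\<And>i j. 1 \<le> i \<Longrightarrow> i \<le> j \<Longrightarrow> j \<le> k \<Longrightarrow> a j \<le> a i"
    and "(\<Sum>i=1..k. a i) = 1"
  shows "Fval k a \<le> Fval k (\<lambda>i. 1 / real k)"
proof (cases "k = 1")
  case True
  then have "a 1 = 1" using assms(4) by simp
  then show ?thesis using True by (simp add: Fval_def)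
next
  case False
  then have k2: "k \<ge> 2" using assms(1) by simp
  define c where "c = 1 / real k"
  have c0: "0 < c" using k2 by (simp add: c_def)
  have c1: "c < 1" using k2 by (simp add: c_def)
  have cb: "\<And>i. 0 \<le> c \<and> c \<le> 1" using c0 c1 by simp
  define L where "L = 2 * (ln c + 1) - (ln (1 - c) + 1)"
  have tang: "hh (1 - c) + 2 * hh c + L * (a i - c) \<le> hh (1 - a i) + 2 * hh (a i)"
    if "1 \<le> i" "i \<le> k" for i
  proof -
    have ai: "0 \<le> a i" "a i \<le> 1" using assms(2) that by auto
    have t1: "hh (1 - c) + (ln (1 - c) + 1) * ((1 - a i) - (1 - c)) \<le> hh (1 - a i)"
      using ai c1 by (intro hh_tangent) auto
    have t2: "hh c + (ln c + 1) * (a i - c) \<le> hh (a i)"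
      using ai c0 by (intro hh_tangent) auto
    show ?thesis using t1 t2 unfolding L_def by (simp add: algebra_simps)
  qed
  have "(\<Sum>i=1..k. hh (1 - c) + 2 * hh c + L * (a i - c))
        \<le> (\<Sum>i=1..k. hh (1 - a i) + 2 * hh (a i))"
    using tang by (intro sum_mono) auto
  moreover have "(\<Sum>i=1..k. hh (1 - c) + 2 * hh c + L * (a i - c))
       = (\<Sum>i=1..k. hh (1 - c) + 2 * hh c)"
  proof -
    have "(\<Sum>i=1..k. L * (a i - c)) = L * ((\<Sum>i=1..k. a i) - real k * c)"
      by (simp add: sum_distrib_left[symmetric] sum_subtractf)
    also have "\<dots> = 0" using assms(4) k2 by (simp add: c_def)
    finally show ?thesis by (simp add: sum.distrib)
  qed
  ultimately have S: "(\<Sum>i=1..k. hh (1 - c) + 2 * hh c) \<le> (\<Sum>i=1..k. hh (1 - a i) + 2 * hh (a i))"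
    by simp
  have P1: "(\<Prod>i=1..k. pow00 (1 - a i) (1 - a i) * pow00 (a i) (2 * a i))
       = exp (\<Sum>i=1..k. hh (1 - a i) + 2 * hh (a i))"
    using assms(2) by (rule prod_exp_form)
  have P2: "(\<Prod>i=1..k. pow00 (1 - (\<lambda>i. 1 / real k) i) (1 - (\<lambda>i. 1 / real k) i)
              * pow00 ((\<lambda>i. 1 / real k) i) (2 * (\<lambda>i. 1 / real k) i))
       = exp (\<Sum>i=1..k. hh (1 - c) + 2 * hh c)"
    using prod_exp_form[of k "\<lambda>i. 1 / real k"] cb unfolding c_def by auto
  show ?thesis unfolding Fval_def P1
    using P2 S by (simp add: c_def divide_simps)
qed

end
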